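(* Let $\lambda>0$ and $K(\sigma,\tau)=\exp(-\lambda d(\sigma,\tau))$ (Mallows kernel) on $S_n$. Let $R_i,R_j\subseteq S_n$ be top-$k$ partial rankings and $N,M\ge1$. Let $(\sigma_n)_{n=1}^N$ be i.i.d. uniform on $R_i$ and $(\tau_m)_{m=1}^M$ i.i.d. uniform on $R_j$, independent of each other. Consider two cases: (antithetic) $\widetilde\sigma_n=A_{R_i}(\sigma_n)$ and $\widetilde\tau_m=A_{R_j}(\tau_m)$; (i.i.d.) $(\widetilde\sigma_n)_{n=1}^N$ i.i.d. uniform on $R_i$ and $(\widetilde\tau_m)_{m=1}^M$ i.i.d. uniform on $R_j$, all independent of each other and of the $\sigma_n,\tau_m$. Let $$\widehat K(R_i,R_j)=\frac1{4NM}\sum_{n=1}^N\sum_{m=1}^M\big(K(\sigma_n,\tau_m)+K(\widetilde\sigma_n,\tau_m)+K(\sigma_n,\widetilde\tau_m)+K(\widetilde\sigma_n,\widetilde\tau_m)\big),$$ and let $V_{\mathrm{anti}}(N,M)$ and $V_{\mathrm{iid}}(N,M)$ denote its variance in the two cases. Then the estimator has the same mean in both cases, and there is a constant $C$ independent of $N,M$ such that $V_{\mathrm{anti}}(N,M)\le V_{\mathrm{iid}}(N,M)+C/(NM)$ for all $N,M$; i.e. the leading-order (order $1/N$ and $1/M$) part of the variance is no larger in the antithetic case.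
   Context: $S_n$ is the symmetric group on $[n]$; $\sigma\in S_n$ is identified with the full ranking $\sigma(1)\succ\cdots\succ\sigma(n)$. For distinct items $x,y$, $\{x,y\}$ is discordant for $\sigma,\tau$ if $(\sigma^{-1}(x)-\sigma^{-1}(y))(\tau^{-1}(x)-\tau^{-1}(y))<0$. The Kendall distance $d(\sigma,\tau)$ is the number of unordered discordant pairs. For $0\le k\le n$ and distinct $a_1,\dots,a_k\in[n]$, the top-$k$ partial ranking is the set $R=\{\sigma\in S_n:\sigma(i)=a_i,\ i\le k\}$ (different $R$'s may have different $k$). The antithetic operator $A_R:R\to R$ is $A_R(\sigma)(i)=a_i$ for $i\le k$ and $A_R(\sigma)(k+j)=\sigma(n+1-j)$ for $j=1,\dots,n-k$. *)

theory Defs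
  imports "HOL-Probability.Probability" "HOL-Combinatorics.Permutations"
begin

(* Permutations of [n] = {1..n}; sigma i is the item at rank i. *)

definition kendall :: "nat \<Rightarrow> (nat \<Rightarrow> nat) \<Rightarrow> (nat \<Rightarrow> nat) \<Rightarrow> nat" where
  "kendall n \<sigma> \<tau> = card {(x, y). x \<in> {1..n} \<and> y \<in> {1..n} \<and> x < y \<and>
     (int (inv \<sigma> x) - int (inv \<sigma> y)) * (int (inv \<tau> x) - int (inv \<tau> y)) < 0}"

definition mallows :: "real \<Rightarrow> nat \<Rightarrow> (nat \<Rightarrow> nat) \<Rightarrow> (nat \<Rightarrow> nat) \<Rightarrow> real" where
  "mallows lam n \<sigma> \<tau> = exp (- lam * real (kendall n \<sigma> \<tau>))"

definition topk_valid :: "nat \<Rightarrow> nat \<Rightarrow> (nat \<Rightarrow> nat) \<Rightarrow> bool" where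
  "topk_valid n k a \<longleftrightarrow> k \<le> n \<and> inj_on a {1..k} \<and> a ` {1..k} \<subseteq> {1..n}"

definition topk :: "nat \<Rightarrow> nat \<Rightarrow> (nat \<Rightarrow> nat) \<Rightarrow> (nat \<Rightarrow> nat) set" where
  "topk n k a = {\<sigma>. \<sigma> permutes {1..n} \<and> (\<forall>i\<in>{1..k}. \<sigma> i = a i)}"

definition antithetic :: "nat \<Rightarrow> nat \<Rightarrow> (nat \<Rightarrow> nat) \<Rightarrow> (nat \<Rightarrow> nat) \<Rightarrow> (nat \<Rightarrow> nat)" where
  "antithetic n k a \<sigma> = (\<lambda>i. if i \<in> {1..k} then a i
                               else if i \<in> {k+1..n} then \<sigma> (n + 1 - (i - k))
                               else i)"

definition Khat :: "real \<Rightarrow> nat \<Rightarrow> nat \<Rightarrow> nat \<Rightarrow>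
    (nat \<Rightarrow> nat \<Rightarrow> nat) \<Rightarrow> (nat \<Rightarrow> nat \<Rightarrow> nat) \<Rightarrow>
    (nat \<Rightarrow> nat \<Rightarrow> nat) \<Rightarrow> (nat \<Rightarrow> nat \<Rightarrow> nat) \<Rightarrow> real" where
  "Khat lam n N M \<sigma>s \<sigma>t \<tau>s \<tau>t =
     (1 / (4 * real N * real M)) *
     (\<Sum>p=1..N. \<Sum>q=1..M. mallows lam n (\<sigma>s p) (\<tau>s q) + mallows lam n (\<sigma>t p) (\<tau>s q)
                         + mallows lam n (\<sigma>s p) (\<tau>t q) + mallows lam n (\<sigma>t p) (\<tau>t q))"

definition iid_samples :: "nat \<Rightarrow> (nat \<Rightarrow> nat) set \<Rightarrow> (nat \<Rightarrow> nat \<Rightarrow> nat) pmf" where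
  "iid_samples N R = Pi_pmf {1..N} undefined (\<lambda>_. pmf_of_set R)"

definition anti_dist where
  "anti_dist n k1 a1 k2 a2 N M = pair_pmf (iid_samples N (topk n k1 a1)) (iid_samples M (topk n k2 a2))"

definition anti_est where
  "anti_est lam n k1 a1 k2 a2 N M = (\<lambda>(\<sigma>s, \<tau>s).
     Khat lam n N M \<sigma>s (\<lambda>p. antithetic n k1 a1 (\<sigma>s p)) \<tau>s (\<lambda>q. antithetic n k2 a2 (\<tau>s q)))"

definition iid_dist where
  "iid_dist n k1 a1 k2 a2 N M =
     pair_pmf (pair_pmf (iid_samples N (topk n k1 a1)) (iid_samples N (topk n k1 a1)))
              (pair_pmf (iid_samples M (topk n k2 a2)) (iid_samples M (topk n k2 a2)))"

definition iid_est where
  "iid_est lam n N M = (\<lambda>((\<sigma>s, \<sigma>t), (\<tau>s, \<tau>t)). Khat lam n N M \<sigma>s \<sigma>t \<tau>s \<tau>t)"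

definition V_anti where
  "V_anti lam n k1 a1 k2 a2 N M =
     measure_pmf.variance (anti_dist n k1 a1 k2 a2 N M) (anti_est lam n k1 a1 k2 a2 N M)"

definition V_iid where
  "V_iid lam n k1 a1 k2 a2 N M =
     measure_pmf.variance (iid_dist n k1 a1 k2 a2 N M) (iid_est lam n N M)"

end

theory Submission
  imports Defs
begin

abbreviation EE :: "'a pmf \<Rightarrow> ('a \<Rightarrow> real) \<Rightarrow> real" where
  "EE p f \<equiv> measure_pmf.expectation p f"

definition fin :: "'a pmf \<Rightarrow> bool" where "fin p \<longleftrightarrow> finite (set_pmf p)"

lemma E_add: "fin p \<Longrightarrow> EE p (\<lambda>x. f x + g x) = EE p f + EE p g"
  unfolding fin_def by (intro Bochner_Integration.integral_add integrable_measure_pmf_finite)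

lemma E_diff: "fin p \<Longrightarrow> EE p (\<lambda>x. f x - g x) = EE p f - EE p g"
  unfolding fin_def by (intro Bochner_Integration.integral_diff integrable_measure_pmf_finite)

lemma E_cmult: "EE p (\<lambda>x. c * f x) = c * EE p f"
  by simp

lemma E_multc: "EE p (\<lambda>x. f x * c) = EE p f * c"
  by simp

lemma E_const: "EE p (\<lambda>x. c) = c"
  by simp

lemma E_sum: "fin p \<Longrightarrow> EE p (\<lambda>x. \<Sum>i\<in>I. f i x) = (\<Sum>i\<in>I. EE p (f i))"
  unfolding fin_def by (intro Bochner_Integration.integral_sum integrable_measure_pmf_finite)

lemma E_finsum: "fin p \<Longrightarrow> EE p f = (\<Sum>x\<in>set_pmf p. f x * pmf p x)"
  unfolding fin_def by (rule integral_measure_pmf_real) auto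

lemma fin_pair: "fin p \<Longrightarrow> fin q \<Longrightarrow> fin (pair_pmf p q)"
  unfolding fin_def by simp

lemma fin_map: "fin p \<Longrightarrow> fin (map_pmf f p)"
  unfolding fin_def by simp

lemma fin_Pi: "finite A \<Longrightarrow> (\<And>x. fin (p x)) \<Longrightarrow> fin (Pi_pmf A d p)"
  unfolding fin_def by (subst set_Pi_pmf) (auto intro!: finite_PiE_dflt)

lemma fin_of_set: "finite S \<Longrightarrow> S \<noteq> {} \<Longrightarrow> fin (pmf_of_set S)"
  unfolding fin_def by simp

lemma E_lin3: "fin p \<Longrightarrow> EE p (\<lambda>y. f1 y + f2 y * c + c2) = EE p f1 + EE p f2 * c + c2"
  by (simp add: E_add)

lemma E_pair: assumes "fin p" "fin q"
  shows "EE (pair_pmf p q) f = EE p (\<lambda>x. EE q (\<lambda>y. f (x, y)))"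
proof -
  have "EE (pair_pmf p q) f = (\<Sum>z\<in>set_pmf p \<times> set_pmf q. f z * pmf (pair_pmf p q) z)"
    using fin_pair[OF assms] by (simp add: E_finsum)
  also have "\<dots> = (\<Sum>x\<in>set_pmf p. \<Sum>y\<in>set_pmf q. f (x,y) * (pmf p x * pmf q y))"
    by (simp add: sum.cartesian_product) (intro sum.cong, auto simp: pmf_pair)
  also have "\<dots> = (\<Sum>x\<in>set_pmf p. (\<Sum>y\<in>set_pmf q. f (x,y) * pmf q y) * pmf p x)"
    unfolding sum_distrib_right by (intro sum.cong refl) (simp add: mult_ac)
  also have "\<dots> = EE p (\<lambda>x. EE q (\<lambda>y. f (x, y)))"
    using assms by (simp add: E_finsum)
  finally show ?thesis .
qed

lemma E_swap: assumes "fin p" "fin q"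
  shows "EE p (\<lambda>x. EE q (\<lambda>y. f x y)) = EE q (\<lambda>y. EE p (\<lambda>x. f x y))"
proof -
  have "EE p (\<lambda>x. EE q (\<lambda>y. f x y)) = (\<Sum>x\<in>set_pmf p. (\<Sum>y\<in>set_pmf q. f x y * pmf q y) * pmf p x)"
    using assms by (simp add: E_finsum)
  also have "\<dots> = (\<Sum>y\<in>set_pmf q. (\<Sum>x\<in>set_pmf p. f x y * pmf p x) * pmf q y)"
    unfolding sum_distrib_right by (subst sum.swap) (simp add: mult_ac)

  also have "\<dots> = EE q (\<lambda>y. EE p (\<lambda>x. f x y))"
    using assms by (simp add: E_finsum)
  finally show ?thesis .
qed

lemma Pi_moments:
  fixes \<phi> :: "'b \<Rightarrow> real"
  assumes "finite A" "fin \<mu>"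
  shows "EE (Pi_pmf A d (\<lambda>_. \<mu>)) (\<lambda>x. \<Sum>p\<in>A. \<phi> (x p)) = real (card A) * EE \<mu> \<phi>
       \<and> EE (Pi_pmf A d (\<lambda>_. \<mu>)) (\<lambda>x. (\<Sum>p\<in>A. \<phi> (x p))^2)
           = real (card A) * EE \<mu> (\<lambda>y. (\<phi> y)^2) + (real (card A)^2 - real (card A)) * (EE \<mu> \<phi>)^2"
  using assms(1)
proof (induction A rule: finite_induct)
  case empty
  then show ?case by simp
next
  case (insert i A)
  let ?P = "Pi_pmf A d (\<lambda>_. \<mu>)"
  have fP: "fin ?P" by (rule fin_Pi[OF insert(1) assms(2)])
  have s: "(\<Sum>p\<in>insert i A. \<phi> ((f(i:=y)) p)) = \<phi> y + (\<Sum>p\<in>A. \<phi> (f p))" for f y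
  proof -
    have "(\<Sum>p\<in>A. \<phi> ((f(i:=y)) p)) = (\<Sum>p\<in>A. \<phi> (f p))"
      using insert(2) by (intro sum.cong) auto
    then show ?thesis using insert(1,2) by simp
  qed
  have 1: "EE (Pi_pmf (insert i A) d (\<lambda>_. \<mu>)) G = EE \<mu> (\<lambda>y. EE ?P (\<lambda>f. G (f(i:=y))))" for G
    using insert(1,2) by (simp add: Pi_pmf_insert E_pair[OF assms(2) fP] case_prod_unfold)
  have c: "card (insert i A) = Suc (card A)" using insert(1,2) by simp
  have a: "EE (Pi_pmf (insert i A) d (\<lambda>_. \<mu>)) (\<lambda>x. \<Sum>p\<in>insert i A. \<phi> (x p))
      = real (card (insert i A)) * EE \<mu> \<phi>"
    unfolding 1 s using insert(3) fP assms(2)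
    by (simp add: E_add c algebra_simps)
  have "EE (Pi_pmf (insert i A) d (\<lambda>_. \<mu>)) (\<lambda>x. (\<Sum>p\<in>insert i A. \<phi> (x p))^2)
      = EE \<mu> (\<lambda>y. EE ?P (\<lambda>f. (\<phi> y)^2 + 2 * \<phi> y * (\<Sum>p\<in>A. \<phi> (f p)) + (\<Sum>p\<in>A. \<phi> (f p))^2))"
    unfolding 1 s by (simp add: power2_sum add_ac)
  also have "\<dots> = EE \<mu> (\<lambda>y. (\<phi> y)^2 + 2 * \<phi> y * (real (card A) * EE \<mu> \<phi>) +
        (real (card A) * EE \<mu> (\<lambda>y. (\<phi> y)^2) + (real (card A)^2 - real (card A)) * (EE \<mu> \<phi>)^2))"
    using insert(3) fP by (simp add: E_add)
  also have "\<dots> = EE \<mu> (\<lambda>y. (\<phi> y)^2 + \<phi> y * (2 * (real (card A) * EE \<mu> \<phi>)) +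
        (real (card A) * EE \<mu> (\<lambda>y. (\<phi> y)^2) + (real (card A)^2 - real (card A)) * (EE \<mu> \<phi>)^2))"
    by (simp add: algebra_simps)
  also have "\<dots> = EE \<mu> (\<lambda>y. (\<phi> y)^2) + EE \<mu> \<phi> * (2 * (real (card A) * EE \<mu> \<phi>)) +
        (real (card A) * EE \<mu> (\<lambda>y. (\<phi> y)^2) + (real (card A)^2 - real (card A)) * (EE \<mu> \<phi>)^2)"
    by (rule E_lin3[OF assms(2)])
  also have "\<dots> = real (card (insert i A)) * EE \<mu> (\<lambda>y. (\<phi> y)^2)
       + (real (card (insert i A))^2 - real (card (insert i A))) * (EE \<mu> \<phi>)^2"
    by (simp add: c algebra_simps power2_eq_square)
  finally show ?case using a by simp
qed

lemma double_moments:
  fixes F :: "'a \<Rightarrow> 'b \<Rightarrow> real" and d :: 'a and d' :: 'b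
  assumes fA: "finite A" and fB: "finite B" and f\<mu>: "fin \<mu>" and f\<nu>: "fin \<nu>"
  defines "X \<equiv> Pi_pmf A d (\<lambda>_. \<mu>)" and "Y \<equiv> Pi_pmf B d' (\<lambda>_. \<nu>)"
  defines "S \<equiv> (\<lambda>z. \<Sum>p\<in>A. \<Sum>q\<in>B. F (fst z p) (snd z q))"
  defines "m \<equiv> EE \<mu> (\<lambda>u. EE \<nu> (F u))"
    and "s \<equiv> EE \<mu> (\<lambda>u. EE \<nu> (\<lambda>v. (F u v)^2))"
    and "a \<equiv> EE \<mu> (\<lambda>u. (EE \<nu> (F u))^2)"
    and "b \<equiv> EE \<nu> (\<lambda>v. (EE \<mu> (\<lambda>u. F u v))^2)"
  shows "EE (pair_pmf X Y) S = real (card A) * real (card B) * m"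
    and "EE (pair_pmf X Y) (\<lambda>z. (S z)^2) =
           real (card B) * (real (card A) * s + (real (card A)^2 - real (card A)) * b)
         + (real (card B)^2 - real (card B)) * (real (card A) * a + (real (card A)^2 - real (card A)) * m^2)"
proof -
  have fX: "fin X" unfolding X_def by (rule fin_Pi[OF fA f\<mu>])
  have fY: "fin Y" unfolding Y_def by (rule fin_Pi[OF fB f\<nu>])
  define G where "G = (\<lambda>x v. \<Sum>p\<in>A. F (x p) v)"
  define H where "H = (\<lambda>u. EE \<nu> (F u))"
  have SG: "S (x, y) = (\<Sum>q\<in>B. G x (y q))" for x y
    unfolding S_def G_def by (simp add: sum.swap[of _ A])
  have EG: "EE \<nu> (G x) = (\<Sum>p\<in>A. H (x p))" for x
    unfolding G_def H_def by (rule E_sum[OF f\<nu>])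
  have inner1: "EE Y (\<lambda>y. S (x, y)) = real (card B) * EE \<nu> (G x)" for x
    unfolding SG Y_def using Pi_moments[OF fB f\<nu>] by blast
  have inner2: "EE Y (\<lambda>y. (S (x, y))^2) = real (card B) * EE \<nu> (\<lambda>v. (G x v)^2)
       + (real (card B)^2 - real (card B)) * (EE \<nu> (G x))^2" for x
    unfolding SG Y_def using Pi_moments[OF fB f\<nu>] by blast
  have HX: "EE X (\<lambda>x. \<Sum>p\<in>A. H (x p)) = real (card A) * m"
    and HX2: "EE X (\<lambda>x. (\<Sum>p\<in>A. H (x p))^2) = real (card A) * a + (real (card A)^2 - real (card A)) * m^2"
    unfolding X_def using Pi_moments[OF fA f\<mu>, of _ H] by (simp_all add: H_def m_def a_def)
  show "EE (pair_pmf X Y) S = real (card A) * real (card B) * m"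
    unfolding E_pair[OF fX fY] inner1 EG using HX by simp
  have GX: "EE X (\<lambda>x. EE \<nu> (\<lambda>v. (G x v)^2)) = real (card A) * s + (real (card A)^2 - real (card A)) * b"
  proof -
    have "EE X (\<lambda>x. EE \<nu> (\<lambda>v. (G x v)^2)) = EE \<nu> (\<lambda>v. EE X (\<lambda>x. (G x v)^2))"
      by (rule E_swap[OF fX f\<nu>])
    also have "\<dots> = EE \<nu> (\<lambda>v. real (card A) * EE \<mu> (\<lambda>u. (F u v)^2) + (real (card A)^2 - real (card A)) * (EE \<mu> (\<lambda>u. F u v))^2)"
      unfolding G_def X_def
    proof (intro arg_cong[where f="EE \<nu>"] ext)
      fix v show "EE (Pi_pmf A d (\<lambda>_. \<mu>)) (\<lambda>x. (\<Sum>p\<in>A. F (x p) v)\<^sup>2) =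
         real (card A) * EE \<mu> (\<lambda>u. (F u v)\<^sup>2) + ((real (card A))\<^sup>2 - real (card A)) * (EE \<mu> (\<lambda>u. F u v))\<^sup>2"
        using Pi_moments[OF fA f\<mu>, of d "\<lambda>u. F u v"] by simp
    qed
    also have "\<dots> = real (card A) * EE \<nu> (\<lambda>v. EE \<mu> (\<lambda>u. (F u v)^2)) + (real (card A)^2 - real (card A)) * b"
      unfolding b_def by (simp add: E_add[OF f\<nu>])
    also have "EE \<nu> (\<lambda>v. EE \<mu> (\<lambda>u. (F u v)^2)) = s"
      unfolding s_def by (rule E_swap[OF f\<nu> f\<mu>])
    finally show ?thesis .
  qed
  show "EE (pair_pmf X Y) (\<lambda>z. (S z)^2) =
           real (card B) * (real (card A) * s + (real (card A)^2 - real (card A)) * b)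
         + (real (card B)^2 - real (card B)) * (real (card A) * a + (real (card A)^2 - real (card A)) * m^2)"
    unfolding E_pair[OF fX fY] inner2 EG
    by (simp add: E_add[OF fX] GX HX2)
qed

lemma variance_scaled:
  assumes "fin P"
  shows "measure_pmf.variance P (\<lambda>z. c * S z) = c^2 * (EE P (\<lambda>z. (S z)^2) - (EE P S)^2)"
proof -
  have i: "integrable P (f :: _ \<Rightarrow> real)" for f using assms unfolding fin_def by (simp add: integrable_measure_pmf_finite)
  have "measure_pmf.variance P (\<lambda>z. c * S z) = EE P (\<lambda>z. (c * S z)^2) - (EE P (\<lambda>z. c * S z))^2"
    by (rule measure_pmf.variance_eq[OF i i])
  then show ?thesis by (simp add: power_mult_distrib algebra_simps)
qed

abbreviation tr :: "nat \<Rightarrow> nat \<Rightarrow> nat \<Rightarrow> nat" where "tr \<equiv> Transposition.transpose"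

definition Dset :: "nat \<Rightarrow> (nat \<Rightarrow> nat) \<Rightarrow> (nat \<Rightarrow> nat) \<Rightarrow> (nat \<times> nat) set" where
  "Dset n \<sigma> \<tau> = {(x, y). x \<in> {1..n} \<and> y \<in> {1..n} \<and> x < y \<and>
     (int (inv \<sigma> x) - int (inv \<sigma> y)) * (int (inv \<tau> x) - int (inv \<tau> y)) < 0}"

lemma kendall_Dset: "kendall n \<sigma> \<tau> = card (Dset n \<sigma> \<tau>)"
  unfolding kendall_def Dset_def by simp

lemma finite_Dset: "finite (Dset n \<sigma> \<tau>)"
  by (rule finite_subset[of _ "{1..n} \<times> {1..n}"]) (auto simp: Dset_def)

lemma kendall_sym: "kendall n \<sigma> \<tau> = kendall n \<tau> \<sigma>"
  unfolding kendall_def by (simp add: mult.commute)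

lemma disc_iff:
  fixes a b c d :: nat
  assumes "a \<noteq> b" "c \<noteq> d"
  shows "(int a - int b) * (int c - int d) < 0 \<longleftrightarrow> ((a < b) \<noteq> (c < d))"
  using assms by (auto simp: mult_less_0_iff)

lemma card_flip:
  assumes "finite D" "finite D'" "\<And>z. z \<noteq> p \<Longrightarrow> z \<in> D' \<longleftrightarrow> z \<in> D"
    "p \<in> D' \<longleftrightarrow> b" "p \<in> D \<longleftrightarrow> \<not> b"
  shows "real (card D') = real (card D) + (if b then 1 else -1)"
proof (cases b)
  case True
  then have "D' = insert p D" using assms(3-5) by (intro set_eqI) (metis insert_iff)
  then show ?thesis using True assms by simp
next
  case False
  then have "D = insert p D'" using assms(3-5) by (intro set_eqI) (metis insert_iff)
  then show ?thesis using False assms by simp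
qed

lemma inv_comp_tr:
  assumes "\<sigma> permutes S"
  shows "inv (\<sigma> \<circ> tr i j) = tr i j \<circ> inv \<sigma>"
proof -
  have "bij \<sigma>" using assms by (rule permutes_bij)
  then show ?thesis by (simp add: o_inv_distrib)
qed

lemma tr_sign:
  fixes x y j :: nat
  assumes "x \<noteq> y" "\<not> ({x, y} = {j, Suc j})"
  shows "(tr j (Suc j) x < tr j (Suc j) y) \<longleftrightarrow> x < y"
  using assms unfolding Transposition.transpose_def by auto

lemma kendall_adj:
  assumes \<sigma>: "\<sigma> permutes {1..n}" and \<tau>: "\<tau> permutes {1..n}" and j: "1 \<le> j" "Suc j \<le> n"
  shows "real (kendall n (\<sigma> \<circ> tr j (Suc j)) \<tau>) = real (kendall n \<sigma> \<tau>) +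
     (if inv \<tau> (\<sigma> j) < inv \<tau> (\<sigma> (Suc j)) then 1 else -1)"
proof -
  let ?s = "tr j (Suc j)"
  let ?u = "\<sigma> j" and ?v = "\<sigma> (Suc j)"
  let ?b = "inv \<tau> (\<sigma> j) < inv \<tau> (\<sigma> (Suc j))"
  define p where "p = (min ?u ?v, max ?u ?v)"
  have injs: "inj \<sigma>" using \<sigma> permutes_inj by blast
  have injit: "inj (inv \<tau>)" using \<tau> by (meson permutes_inv permutes_inj)
  have injis: "inj (inv \<sigma>)" using \<sigma> by (meson permutes_inv permutes_inj)
  have uv: "?u \<noteq> ?v" using injs by (auto dest: injD)
  have iu: "inv \<sigma> ?u = j" and iv: "inv \<sigma> ?v = Suc j" using \<sigma> by (auto simp: permutes_inverses)
  have ius: "inv (\<sigma> \<circ> ?s) z = ?s (inv \<sigma> z)" for z using inv_comp_tr[OF \<sigma>] by simp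
  have un: "?u \<in> {1..n}" "?v \<in> {1..n}" using j by (simp_all only: permutes_in_image[OF \<sigma>]) auto
  have key: "(z \<in> Dset n (\<sigma> \<circ> ?s) \<tau>) \<longleftrightarrow> (z \<in> Dset n \<sigma> \<tau>)" if "z \<noteq> p" for z
  proof -
    obtain x y where z: "z = (x, y)" by (cases z)
    show ?thesis
    proof (cases "x \<in> {1..n} \<and> y \<in> {1..n} \<and> x < y")
      case False then show ?thesis unfolding Dset_def z by blast
    next
      case True
      then have xy: "x \<noteq> y" by simp
      have nxy: "\<not> ({inv \<sigma> x, inv \<sigma> y} = {j, Suc j})"
      proof
        assume "{inv \<sigma> x, inv \<sigma> y} = {j, Suc j}"
        then have "(inv \<sigma> x = j \<and> inv \<sigma> y = Suc j) \<or> (inv \<sigma> x = Suc j \<and> inv \<sigma> y = j)"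
          by (simp add: doubleton_eq_iff)
        moreover have ex: "x = \<sigma> (inv \<sigma> x)" "y = \<sigma> (inv \<sigma> y)"
          by (simp_all add: permutes_inverses(1)[OF \<sigma>])
        ultimately have "(x = ?u \<and> y = ?v) \<or> (x = ?v \<and> y = ?u)" by metis
        then have "z = p" using True by (auto simp: z p_def)
        then show False using that by simp
      qed
      have i1: "inv \<sigma> x \<noteq> inv \<sigma> y" using injis xy by (auto dest: injD)
      have i2: "inv \<tau> x \<noteq> inv \<tau> y" using injit xy by (auto dest: injD)
      have i3: "?s (inv \<sigma> x) \<noteq> ?s (inv \<sigma> y)" using i1 by (metis Transposition.transpose_involutory)
      show ?thesis using True
        by (simp add: Dset_def z ius disc_iff[OF i1 i2] disc_iff[OF i3 i2] tr_sign[OF i1 nxy])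
    qed
  qed
  have bu: "inv \<tau> ?u \<noteq> inv \<tau> ?v" using injit uv by (auto dest: injD)
  have p1: "p \<in> Dset n (\<sigma> \<circ> ?s) \<tau> \<longleftrightarrow> ?b"
  proof (cases "?u < ?v")
    case True then show ?thesis using un bu
      by (simp add: Dset_def p_def ius iu iv disc_iff)
  next
    case False then show ?thesis using un bu uv
      by (auto simp add: Dset_def p_def ius iu iv disc_iff min_def max_def)
  qed
  have p2: "p \<in> Dset n \<sigma> \<tau> \<longleftrightarrow> \<not> ?b"
  proof (cases "?u < ?v")
    case True then show ?thesis using un bu
      by (auto simp add: Dset_def p_def iu iv disc_iff)
  next
    case False then show ?thesis using un bu uv
      by (auto simp add: Dset_def p_def iu iv disc_iff min_def max_def)
  qed
  show ?thesis unfolding kendall_Dset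
    by (rule card_flip[OF finite_Dset finite_Dset key p1 p2])
qed

definition D2 :: "nat \<Rightarrow> (nat \<Rightarrow> nat) \<Rightarrow> (nat \<Rightarrow> nat) \<Rightarrow> (nat \<times> nat) set" where
  "D2 n \<sigma> \<tau> = {(x, y). x \<in> {1..n} \<and> y \<in> {1..n} \<and> x \<noteq> y \<and>
     (int (inv \<sigma> x) - int (inv \<sigma> y)) * (int (inv \<tau> x) - int (inv \<tau> y)) < 0}"

lemma card_D2: "card (D2 n \<sigma> \<tau>) = 2 * card (Dset n \<sigma> \<tau>)"
proof -
  have sym: "(int a - int b) * (int c - int d) = (int b - int a) * (int d - int c)" for a b c d
    by (simp add: algebra_simps)
  have eq: "D2 n \<sigma> \<tau> = Dset n \<sigma> \<tau> \<union> prod.swap ` Dset n \<sigma> \<tau>"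
  proof (intro set_eqI iffI)
    fix z assume "z \<in> D2 n \<sigma> \<tau>"
    then obtain x y where z: "z = (x, y)" and h: "x \<in> {1..n}" "y \<in> {1..n}" "x \<noteq> y"
      "(int (inv \<sigma> x) - int (inv \<sigma> y)) * (int (inv \<tau> x) - int (inv \<tau> y)) < 0"
      unfolding D2_def by blast
    show "z \<in> Dset n \<sigma> \<tau> \<union> prod.swap ` Dset n \<sigma> \<tau>"
    proof (cases "x < y")
      case True then show ?thesis using h by (auto simp: z Dset_def)
    next
      case False
      then have "(y, x) \<in> Dset n \<sigma> \<tau>" using h sym[of "inv \<sigma> x"] by (auto simp: Dset_def)
      then have "prod.swap (y, x) \<in> prod.swap ` Dset n \<sigma> \<tau>" by (rule imageI)
      then show ?thesis by (simp add: z)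
    qed
  next
    fix z assume "z \<in> Dset n \<sigma> \<tau> \<union> prod.swap ` Dset n \<sigma> \<tau>"
    then show "z \<in> D2 n \<sigma> \<tau>"
    proof
      assume "z \<in> Dset n \<sigma> \<tau>" then show ?thesis by (auto simp: Dset_def D2_def)
    next
      assume "z \<in> prod.swap ` Dset n \<sigma> \<tau>"
      then obtain x y where z: "z = (y, x)" and h: "(x, y) \<in> Dset n \<sigma> \<tau>" by auto
      from h have "x \<in> {1..n}" "y \<in> {1..n}" "x < y"
        "(int (inv \<sigma> x) - int (inv \<sigma> y)) * (int (inv \<tau> x) - int (inv \<tau> y)) < 0"
        by (simp_all add: Dset_def)
      then show ?thesis unfolding z D2_def using sym[of "inv \<sigma> y" "inv \<sigma> x" "inv \<tau> y" "inv \<tau> x"]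
        by simp
    qed
  qed
  have disj: "Dset n \<sigma> \<tau> \<inter> prod.swap ` Dset n \<sigma> \<tau> = {}"
    by (auto simp: Dset_def)
  have "card (D2 n \<sigma> \<tau>) = card (Dset n \<sigma> \<tau>) + card (prod.swap ` Dset n \<sigma> \<tau>)"
    unfolding eq by (rule card_Un_disjoint[OF finite_Dset finite_imageI[OF finite_Dset] disj])
  also have "card (prod.swap ` Dset n \<sigma> \<tau>) = card (Dset n \<sigma> \<tau>)"
    by (rule card_image, rule inj_onI) (metis swap_swap)
  finally show ?thesis by simp
qed

lemma kendall_relabel:
  assumes g: "g permutes {1..n}" and \<sigma>: "\<sigma> permutes {1..n}" and \<tau>: "\<tau> permutes {1..n}"
  shows "kendall n (g \<circ> \<sigma>) (g \<circ> \<tau>) = kendall n \<sigma> \<tau>"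
proof -
  have bg: "bij g" using g by (rule permutes_bij)
  have i1: "inv (g \<circ> \<sigma>) = inv \<sigma> \<circ> inv g" using bg permutes_bij[OF \<sigma>] by (simp add: o_inv_distrib)
  have i2: "inv (g \<circ> \<tau>) = inv \<tau> \<circ> inv g" using bg permutes_bij[OF \<tau>] by (simp add: o_inv_distrib)
  have gi: "g (inv g x) = x" "inv g (g x) = x" for x using g by (simp_all add: permutes_inverses)
  have gin: "g x \<in> {1..n} \<longleftrightarrow> x \<in> {1..n}" for x using permutes_in_image[OF g] by blast
  have ign: "inv g x \<in> {1..n} \<longleftrightarrow> x \<in> {1..n}" for x
    using permutes_in_image[OF permutes_inv[OF g]] by blast
  have "bij_betw (\<lambda>(x, y). (g x, g y)) (D2 n \<sigma> \<tau>) (D2 n (g \<circ> \<sigma>) (g \<circ> \<tau>))"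
  proof (rule bij_betw_byWitness[where f'="\<lambda>(x, y). (inv g x, inv g y)"])
    show "\<forall>a\<in>D2 n \<sigma> \<tau>. (case case a of (x, y) \<Rightarrow> (g x, g y) of (x, y) \<Rightarrow> (inv g x, inv g y)) = a"
      by (auto simp: gi)
    show "\<forall>a'\<in>D2 n (g \<circ> \<sigma>) (g \<circ> \<tau>). (case case a' of (x, y) \<Rightarrow> (inv g x, inv g y) of (x, y) \<Rightarrow> (g x, g y)) = a'"
      by (auto simp: gi)
    show "(\<lambda>(x, y). (g x, g y)) ` D2 n \<sigma> \<tau> \<subseteq> D2 n (g \<circ> \<sigma>) (g \<circ> \<tau>)"
    proof (clarify)
      fix x y assume "(x, y) \<in> D2 n \<sigma> \<tau>"
      then have h: "x \<in> {1..n}" "y \<in> {1..n}" "x \<noteq> y"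
        "(int (inv \<sigma> x) - int (inv \<sigma> y)) * (int (inv \<tau> x) - int (inv \<tau> y)) < 0"
        by (simp_all add: D2_def)
      have "g x \<noteq> g y" using h(3) by (metis gi(2))
      then show "(g x, g y) \<in> D2 n (g \<circ> \<sigma>) (g \<circ> \<tau>)"
        using h gin[of x] gin[of y] by (simp add: D2_def i1 i2 gi(2))
    qed
    show "(\<lambda>(x, y). (inv g x, inv g y)) ` D2 n (g \<circ> \<sigma>) (g \<circ> \<tau>) \<subseteq> D2 n \<sigma> \<tau>"
    proof (clarify)
      fix x y assume "(x, y) \<in> D2 n (g \<circ> \<sigma>) (g \<circ> \<tau>)"
      then have h: "x \<in> {1..n}" "y \<in> {1..n}" "x \<noteq> y"
        "(int (inv \<sigma> (inv g x)) - int (inv \<sigma> (inv g y))) * (int (inv \<tau> (inv g x)) - int (inv \<tau> (inv g y))) < 0"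
        by (simp_all add: D2_def i1 i2)
      have "inv g x \<noteq> inv g y" using h(3) by (metis gi(1))
      then show "(inv g x, inv g y) \<in> D2 n \<sigma> \<tau>"
        using h ign[of x] ign[of y] by (simp add: D2_def)
    qed
  qed
  then have "card (D2 n \<sigma> \<tau>) = card (D2 n (g \<circ> \<sigma>) (g \<circ> \<tau>))" by (rule bij_betw_same_card)
  then show ?thesis unfolding kendall_Dset card_D2 by simp
qed

lemma topk_perm: "\<sigma> \<in> topk n k a \<Longrightarrow> \<sigma> permutes {1..n}"
  by (simp add: topk_def)

lemma topk_top: "\<sigma> \<in> topk n k a \<Longrightarrow> i \<in> {1..k} \<Longrightarrow> \<sigma> i = a i"
  by (simp add: topk_def)

lemma chain_mono:
  fixes f :: "nat \<Rightarrow> nat"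
  assumes "\<And>j. i \<le> j \<Longrightarrow> Suc j \<le> n \<Longrightarrow> f j < f (Suc j)"
  shows "i + t \<le> n \<Longrightarrow> f i + t \<le> f (i + t)"
proof (induction t)
  case 0 then show ?case by simp
next
  case (Suc t)
  then have "f i + t \<le> f (i + t)" by simp
  moreover have "f (i + t) < f (Suc (i + t))" using assms[of "i + t"] Suc.prems by simp
  ultimately show ?case by simp
qed

lemma descent_exists:
  assumes s: "\<sigma> \<in> topk n k a" and s0: "\<sigma>0 \<in> topk n k a" and ne: "\<sigma> \<noteq> \<sigma>0"
  shows "\<exists>j. k < j \<and> Suc j \<le> n \<and> \<not> (inv \<sigma>0 (\<sigma> j) < inv \<sigma>0 (\<sigma> (Suc j)))"
proof (rule ccontr)
  assume "\<not> ?thesis"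
  then have mono: "\<And>j. Suc k \<le> j \<Longrightarrow> Suc j \<le> n \<Longrightarrow> inv \<sigma>0 (\<sigma> j) < inv \<sigma>0 (\<sigma> (Suc j))"
    by auto
  define f where "f = inv \<sigma>0 \<circ> \<sigma>"
  have p: "\<sigma> permutes {1..n}" and p0: "\<sigma>0 permutes {1..n}" using topk_perm[OF s] topk_perm[OF s0] by blast+
  have fp: "f permutes {1..n}" unfolding f_def by (rule permutes_compose[OF p permutes_inv[OF p0]])
  have ftop: "f i = i" if "i \<in> {1..k}" for i
    using topk_top[OF s that] topk_top[OF s0 that] permutes_inverses(2)[OF p0, of i] by (simp add: f_def)
  have fm: "\<And>j. Suc k \<le> j \<Longrightarrow> Suc j \<le> n \<Longrightarrow> f j < f (Suc j)" using mono by (simp add: f_def)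
  have fin: "f j \<in> {1..n}" if "j \<in> {1..n}" for j using permutes_in_image[OF fp] that by blast
  have fgt: "k < f j" if "j \<in> {Suc k..n}" for j
  proof (rule ccontr)
    assume "\<not> k < f j"
    then have "f j \<in> {1..k}" using fin[of j] that by auto
    then have "f (f j) = f j" by (rule ftop)
    then have "f j = j" using permutes_inj[OF fp] by (auto dest: injD)
    then show False using that \<open>\<not> k < f j\<close> by simp
  qed
  have fid: "f j = j" if j: "j \<in> {Suc k..n}" for j
  proof -
    have c1: "f (Suc k) + (j - Suc k) \<le> f (Suc k + (j - Suc k))"
      by (rule chain_mono[where f=f and i="Suc k" and n=n]) (use fm j in auto)
    have c2: "f j + (n - j) \<le> f (j + (n - j))"
      by (rule chain_mono[where f=f and i=j and n=n]) (use fm j in auto)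
    have "Suc k \<le> f (Suc k)" using fgt[of "Suc k"] j by auto
    moreover have "f n \<le> n" using fin[of n] j by auto
    ultimately show ?thesis using c1 c2 j by auto
  qed
  have "\<sigma> = \<sigma>0"
  proof
    fix i
    show "\<sigma> i = \<sigma>0 i"
    proof (cases "i \<in> {1..n}")
      case False then show ?thesis using p p0 by (simp add: permutes_not_in)
    next
      case True
      show ?thesis
      proof (cases "i \<le> k")
        case True then show ?thesis using topk_top[OF s] topk_top[OF s0] \<open>i \<in> {1..n}\<close> by simp
      next
        case False
        then have "f i = i" using fid \<open>i \<in> {1..n}\<close> by simp
        then have "\<sigma>0 (f i) = \<sigma>0 i" by simp
        then show ?thesis using p0 by (simp add: f_def permutes_inverses)
      qed
    qed
  qed
  then show False using ne by simp
qed

lemma topk_swap: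
  assumes s: "\<sigma> \<in> topk n k a" and j: "k < j" "Suc j \<le> n"
  shows "\<sigma> \<circ> tr j (Suc j) \<in> topk n k a"
proof -
  have "tr j (Suc j) permutes {1..n}" using j by (intro permutes_swap_id) auto
  then have "\<sigma> \<circ> tr j (Suc j) permutes {1..n}" using topk_perm[OF s] by (rule permutes_compose)
  moreover have "(\<sigma> \<circ> tr j (Suc j)) i = a i" if "i \<in> {1..k}" for i
    using that j topk_top[OF s that] by (simp add: Transposition.transpose_def)
  ultimately show ?thesis by (simp add: topk_def)
qed

lemma tail_connected:
  assumes s0: "\<sigma>0 \<in> topk n k a"
    and inv: "\<And>\<sigma> j. \<sigma> \<in> topk n k a \<Longrightarrow> k < j \<Longrightarrow> Suc j \<le> n \<Longrightarrow> Q (\<sigma> \<circ> tr j (Suc j)) = Q \<sigma>"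
    and s: "\<sigma> \<in> topk n k a"
  shows "Q \<sigma> = Q \<sigma>0"
proof -
  have "\<forall>\<sigma>\<in>topk n k a. kendall n \<sigma> \<sigma>0 = m \<longrightarrow> Q \<sigma> = Q \<sigma>0" for m
  proof (induction m)
    case 0
    show ?case
    proof (intro ballI impI)
      fix \<sigma> assume s: "\<sigma> \<in> topk n k a" and k0: "kendall n \<sigma> \<sigma>0 = 0"
      show "Q \<sigma> = Q \<sigma>0"
      proof (cases "\<sigma> = \<sigma>0")
        case False
        then obtain j where j: "k < j" "Suc j \<le> n" "\<not> (inv \<sigma>0 (\<sigma> j) < inv \<sigma>0 (\<sigma> (Suc j)))"
          using descent_exists[OF s s0] by blast
        have "real (kendall n (\<sigma> \<circ> tr j (Suc j)) \<sigma>0) = real (kendall n \<sigma> \<sigma>0) - 1"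
          using kendall_adj[OF topk_perm[OF s] topk_perm[OF s0], of j] j by simp
        then show ?thesis using k0 by simp
      qed simp
    qed
  next
    case (Suc m)
    show ?case
    proof (intro ballI impI)
      fix \<sigma> assume s: "\<sigma> \<in> topk n k a" and km: "kendall n \<sigma> \<sigma>0 = Suc m"
      show "Q \<sigma> = Q \<sigma>0"
      proof (cases "\<sigma> = \<sigma>0")
        case False
        then obtain j where j: "k < j" "Suc j \<le> n" "\<not> (inv \<sigma>0 (\<sigma> j) < inv \<sigma>0 (\<sigma> (Suc j)))"
          using descent_exists[OF s s0] by blast
        have "real (kendall n (\<sigma> \<circ> tr j (Suc j)) \<sigma>0) = real (kendall n \<sigma> \<sigma>0) - 1"
          using kendall_adj[OF topk_perm[OF s] topk_perm[OF s0], of j] j by simp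
        then have "kendall n (\<sigma> \<circ> tr j (Suc j)) \<sigma>0 = m" using km by simp
        then have "Q (\<sigma> \<circ> tr j (Suc j)) = Q \<sigma>0" using Suc.IH topk_swap[OF s j(1,2)] by blast
        then show ?thesis using inv[OF s j(1,2)] by simp
      qed simp
    qed
  qed
  then show ?thesis using s by blast
qed

definition rv :: "nat \<Rightarrow> nat \<Rightarrow> nat \<Rightarrow> nat" where
  "rv n k i = (if i \<in> {Suc k..n} then n + Suc k - i else i)"

lemma rv_rv: "rv n k (rv n k i) = i"
  unfolding rv_def by auto

lemma rv_permutes: "rv n k permutes {1..n}"
  unfolding permutes_def
proof (intro conjI allI impI)
  fix x assume "x \<notin> {1..n}" then show "rv n k x = x" by (auto simp: rv_def)
next
  fix y show "\<exists>!x. rv n k x = y"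
    by (rule ex1I[of _ "rv n k y"]) (use rv_rv in metis)+
qed

lemma anti_eq:
  assumes "\<sigma> \<in> topk n k a"
  shows "antithetic n k a \<sigma> = \<sigma> \<circ> rv n k"
proof
  fix i
  have p: "\<sigma> permutes {1..n}" using assms by (rule topk_perm)
  show "antithetic n k a \<sigma> i = (\<sigma> \<circ> rv n k) i"
  proof (cases "i \<in> {1..k}")
    case True then show ?thesis using topk_top[OF assms True] by (auto simp: antithetic_def rv_def)
  next
    case F: False
    show ?thesis
    proof (cases "i \<in> {k+1..n}")
      case True
      then have "n + 1 - (i - k) = n + Suc k - i" by auto
      then show ?thesis using F True by (auto simp: antithetic_def rv_def)
    next
      case False
      then have "i \<notin> {1..n}" using F by auto
      then show ?thesis using F False p by (auto simp: antithetic_def rv_def permutes_not_in)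
    qed
  qed
qed

lemma comp_rv_topk:
  assumes "\<sigma> \<in> topk n k a"
  shows "\<sigma> \<circ> rv n k \<in> topk n k a"
proof -
  have "\<sigma> \<circ> rv n k permutes {1..n}" by (rule permutes_compose[OF rv_permutes topk_perm[OF assms]])
  moreover have "(\<sigma> \<circ> rv n k) i = a i" if "i \<in> {1..k}" for i
    using that topk_top[OF assms that] by (simp add: rv_def)
  ultimately show ?thesis by (simp add: topk_def)
qed

lemma anti_bij: "bij_betw (antithetic n k a) (topk n k a) (topk n k a)"
proof (rule bij_betw_byWitness[where f'="antithetic n k a"])
  show "\<forall>x\<in>topk n k a. antithetic n k a (antithetic n k a x) = x"
    by (auto simp: anti_eq comp_rv_topk o_assoc[symmetric] rv_rv fun_eq_iff)
  then show "\<forall>x\<in>topk n k a. antithetic n k a (antithetic n k a x) = x" .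
  show "antithetic n k a ` topk n k a \<subseteq> topk n k a"
    by (auto simp: anti_eq comp_rv_topk)
  then show "antithetic n k a ` topk n k a \<subseteq> topk n k a" .
qed

lemma finite_topk: "finite (topk n k a)"
  by (rule finite_subset[OF _ finite_permutations[of "{1..n}"]]) (auto simp: topk_def)

lemma topk_nonempty:
  assumes "topk_valid n k a"
  shows "topk n k a \<noteq> {}"
proof -
  have kn: "k \<le> n" and ia: "inj_on a {1..k}" and im: "a ` {1..k} \<subseteq> {1..n}"
    using assms by (auto simp: topk_valid_def)
  let ?T = "{Suc k..n}" and ?S = "{1..n} - a ` {1..k}"
  have "card ?S = n - k" using card_Diff_subset[OF finite_imageI im] card_image[OF ia] by simp
  then have "card ?T = card ?S" by simp
  then obtain g where g: "bij_betw g ?T ?S" using finite_same_card_bij by blast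
  define \<sigma> where "\<sigma> = (\<lambda>i. if i \<in> {1..k} then a i else if i \<in> ?T then g i else i)"
  have b1: "bij_betw \<sigma> {1..k} (a ` {1..k})"
    using ia by (subst bij_betw_cong[where g=a]) (auto simp: \<sigma>_def inj_on_imp_bij_betw)
  have b2: "bij_betw \<sigma> ?T ?S"
    using g by (subst bij_betw_cong[where g=g]) (auto simp: \<sigma>_def)
  have "bij_betw \<sigma> ({1..k} \<union> ?T) (a ` {1..k} \<union> ?S)"
    by (rule bij_betw_combine[OF b1 b2]) auto
  moreover have "{1..k} \<union> ?T = {1..n}" using kn by auto
  moreover have "a ` {1..k} \<union> ?S = {1..n}" using im by auto
  ultimately have "bij_betw \<sigma> {1..n} {1..n}" by simp
  moreover have "\<sigma> x = x" if "x \<notin> {1..n}" for x using that kn by (auto simp: \<sigma>_def)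
  ultimately have "\<sigma> permutes {1..n}" by (rule bij_imp_permutes)
  then have "\<sigma> \<in> topk n k a" by (simp add: topk_def \<sigma>_def)
  then show ?thesis by blast
qed

definition hs :: "real \<Rightarrow> nat \<Rightarrow> (nat \<Rightarrow> nat) set \<Rightarrow> (nat \<Rightarrow> nat) \<Rightarrow> real" where
  "hs lam n R \<sigma> = (\<Sum>\<tau>\<in>R. exp (- lam * real (kendall n \<sigma> \<tau>)))"

lemma swap_eq_tr:
  assumes "inj \<sigma>" "\<sigma> x = u" "\<sigma> (Suc x) = v"
  shows "\<sigma> \<circ> tr x (Suc x) = tr u v \<circ> \<sigma>"
proof
  fix i
  have uv: "u \<noteq> v" using assms by (metis injD n_not_Suc_n)
  show "(\<sigma> \<circ> tr x (Suc x)) i = (tr u v \<circ> \<sigma>) i"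
  proof (cases "i = x \<or> i = Suc x")
    case True then show ?thesis using assms uv by auto
  next
    case False
    then have "\<sigma> i \<noteq> u" "\<sigma> i \<noteq> v" using assms by (metis injD)+
    then show ?thesis using False by simp
  qed
qed

lemma rv_tr:
  assumes "k < j" "Suc j \<le> n"
  shows "tr j (Suc j) \<circ> rv n k = rv n k \<circ> tr (n + k - j) (Suc (n + k - j))"
proof
  fix i
  show "(tr j (Suc j) \<circ> rv n k) i = (rv n k \<circ> tr (n + k - j) (Suc (n + k - j))) i"
  proof -
    let ?r = "rv n k" and ?j = "n + k - j"
    have r1: "?r j = Suc ?j" and r2: "?r (Suc j) = ?j" using assms by (auto simp: rv_def)
    have r3: "?r (Suc ?j) = j" and r4: "?r ?j = Suc j" using r1 r2 rv_rv by metis+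
    show ?thesis
    proof (cases "i = ?j \<or> i = Suc ?j")
      case True then show ?thesis using r3 r4 by auto
    next
      case False
      then have "?r i \<noteq> j" "?r i \<noteq> Suc j" using r1 r2 rv_rv by metis+
      then show ?thesis using False by simp
    qed
  qed
qed

lemma pos_top:
  assumes "\<tau> \<in> topk n k a" "i \<in> {1..k}"
  shows "inv \<tau> (a i) = i"
  using topk_top[OF assms] permutes_inverses(2)[OF topk_perm[OF assms(1)]] by metis

lemma pos_rest:
  assumes "\<tau> \<in> topk n k a" "x \<in> {1..n}" "x \<notin> a ` {1..k}"
  shows "k < inv \<tau> x"
proof (rule ccontr)
  have p: "\<tau> permutes {1..n}" using assms(1) by (rule topk_perm)
  assume "\<not> k < inv \<tau> x"
  moreover have "inv \<tau> x \<in> {1..n}" using assms(2) permutes_in_image[OF permutes_inv[OF p]] by blast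
  ultimately have "inv \<tau> x \<in> {1..k}" by auto
  then have "\<tau> (inv \<tau> x) = a (inv \<tau> x)" by (rule topk_top[OF assms(1)])
  then have "x = a (inv \<tau> x)" using permutes_inverses(1)[OF p] by metis
  then show False using assms(3) \<open>inv \<tau> x \<in> {1..k}\<close> by blast
qed

lemma order_const:
  assumes "u \<in> {1..n}" "v \<in> {1..n}" "u \<in> a ` {1..k} \<or> v \<in> a ` {1..k}"
    and "\<tau> \<in> topk n k a" "\<tau>' \<in> topk n k a"
  shows "(inv \<tau> u < inv \<tau> v) = (inv \<tau>' u < inv \<tau>' v)"
proof (cases "u \<in> a ` {1..k}")
  case True
  then obtain p where p: "p \<in> {1..k}" "u = a p" by blast
  show ?thesis
  proof (cases "v \<in> a ` {1..k}")
    case True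
    then obtain q where q: "q \<in> {1..k}" "v = a q" by blast
    show ?thesis using p q pos_top[OF assms(4)] pos_top[OF assms(5)] by simp
  next
    case False
    then show ?thesis using p pos_top[OF assms(4) p(1)] pos_top[OF assms(5) p(1)]
        pos_rest[OF assms(4) assms(2)] pos_rest[OF assms(5) assms(2)] by auto
  qed
next
  case False
  then have "v \<in> a ` {1..k}" using assms(3) by blast
  then obtain q where q: "q \<in> {1..k}" "v = a q" by blast
  show ?thesis using q pos_top[OF assms(4) q(1)] pos_top[OF assms(5) q(1)]
        pos_rest[OF assms(4) assms(1) False] pos_rest[OF assms(5) assms(1) False] by auto
qed

lemma hs_relabel:
  assumes g: "g permutes {1..n}" and fix2: "\<And>i. i \<in> {1..k2} \<Longrightarrow> g (a2 i) = a2 i"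
    and gg: "g \<circ> g = id" and \<rho>: "\<rho> permutes {1..n}"
  shows "hs lam n (topk n k2 a2) (g \<circ> \<rho>) = hs lam n (topk n k2 a2) \<rho>"
proof -
  let ?R = "topk n k2 a2"
  have gR: "g \<circ> \<tau> \<in> ?R" if "\<tau> \<in> ?R" for \<tau>
  proof -
    have "g \<circ> \<tau> permutes {1..n}" by (rule permutes_compose[OF topk_perm[OF that] g])
    moreover have "(g \<circ> \<tau>) i = a2 i" if "i \<in> {1..k2}" for i
      using topk_top[OF \<open>\<tau> \<in> ?R\<close> that] fix2[OF that] by simp
    ultimately show ?thesis by (simp add: topk_def)
  qed
  have ggt: "g \<circ> (g \<circ> \<tau>) = \<tau>" for \<tau> by (metis comp_assoc gg id_comp)
  have "hs lam n ?R (g \<circ> \<rho>) = (\<Sum>\<tau>\<in>?R. exp (- lam * real (kendall n (g \<circ> \<rho>) (g \<circ> \<tau>))))"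
    unfolding hs_def
    by (rule sum.reindex_bij_witness[of _ "\<lambda>\<tau>. g \<circ> \<tau>" "\<lambda>\<tau>. g \<circ> \<tau>"]) (auto simp: ggt gR)
  also have "\<dots> = hs lam n ?R \<rho>"
    unfolding hs_def by (intro sum.cong refl) (simp add: kendall_relabel[OF g \<rho> topk_perm])
  finally show ?thesis .
qed

lemma hs_shift:
  assumes "\<And>\<tau>. \<tau> \<in> R \<Longrightarrow> real (kendall n \<sigma>' \<tau>) = real (kendall n \<sigma> \<tau>) + e"
  shows "hs lam n R \<sigma>' = exp (- lam * e) * hs lam n R \<sigma>"
  unfolding hs_def sum_distrib_left
  by (intro sum.cong refl) (simp add: assms algebra_simps flip: exp_add)

lemma core_step:
  fixes lam :: real
  assumes v1: "topk_valid n k1 a1" and v2: "topk_valid n k2 a2"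
    and s: "\<sigma> \<in> topk n k1 a1" and j: "k1 < j" "Suc j \<le> n"
  defines "Q \<equiv> \<lambda>\<sigma>. hs lam n (topk n k2 a2) \<sigma> * hs lam n (topk n k2 a2) (\<sigma> \<circ> rv n k1)"
  shows "Q (\<sigma> \<circ> tr j (Suc j)) = Q \<sigma>"
proof -
  let ?R = "topk n k2 a2" and ?h = "hs lam n (topk n k2 a2)"
  define j' where "j' = n + k1 - j"
  have j': "k1 < j'" "Suc j' \<le> n" using j by (auto simp: j'_def)
  define \<sigma>' where "\<sigma>' = \<sigma> \<circ> rv n k1"
  have s': "\<sigma>' \<in> topk n k1 a1" unfolding \<sigma>'_def by (rule comp_rv_topk[OF s])
  have p: "\<sigma> permutes {1..n}" and p': "\<sigma>' permutes {1..n}" using topk_perm[OF s] topk_perm[OF s'] by blast+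
  have comp: "(\<sigma> \<circ> tr j (Suc j)) \<circ> rv n k1 = \<sigma>' \<circ> tr j' (Suc j')"
    unfolding \<sigma>'_def j'_def by (simp add: comp_assoc rv_tr[OF j])
  define u where "u = \<sigma> j"
  define v where "v = \<sigma> (Suc j)"
  have rvj: "rv n k1 j' = Suc j" "rv n k1 (Suc j') = j" using j by (auto simp: rv_def j'_def)
  have u': "\<sigma>' (Suc j') = u" and v': "\<sigma>' j' = v" by (simp_all add: \<sigma>'_def rvj u_def v_def)
  have un: "u \<in> {1..n}" "v \<in> {1..n}" using j unfolding u_def v_def
    by (simp_all only: permutes_in_image[OF p]) auto
  have injs: "inj \<sigma>" using p by (rule permutes_inj)
  have uv: "u \<noteq> v" using injs unfolding u_def v_def by (metis injD n_not_Suc_n)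
  have j1: "1 \<le> j" "1 \<le> j'" using j j' by auto
  have adj: "real (kendall n (\<sigma> \<circ> tr j (Suc j)) \<tau>) = real (kendall n \<sigma> \<tau>) + (if inv \<tau> u < inv \<tau> v then 1 else -1)"
    if "\<tau> \<in> ?R" for \<tau>
    using kendall_adj[OF p topk_perm[OF that] j1(1) j(2)] by (simp add: u_def v_def)
  have adj': "real (kendall n (\<sigma>' \<circ> tr j' (Suc j')) \<tau>) = real (kendall n \<sigma>' \<tau>) + (if inv \<tau> v < inv \<tau> u then 1 else -1)"
    if "\<tau> \<in> ?R" for \<tau>
    using kendall_adj[OF p' topk_perm[OF that] j1(2) j'(2)] by (simp add: u' v')
  have "Q (\<sigma> \<circ> tr j (Suc j)) = ?h (\<sigma> \<circ> tr j (Suc j)) * ?h (\<sigma>' \<circ> tr j' (Suc j'))"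
    unfolding Q_def comp ..
  also have "\<dots> = ?h \<sigma> * ?h \<sigma>'"
  proof (cases "u \<in> a2 ` {1..k2} \<or> v \<in> a2 ` {1..k2}")
    case True
    show ?thesis
    proof (cases "?R = {}")
      case True then show ?thesis by (simp add: hs_def)
    next
      case False
      then obtain \<tau>0 where t0: "\<tau>0 \<in> ?R" by blast
      define b where "b = (inv \<tau>0 u < inv \<tau>0 v)"
      define e where "e = (if b then 1 else -1 :: real)"
      have bc: "(inv \<tau> u < inv \<tau> v) = b" if "\<tau> \<in> ?R" for \<tau>
        using order_const[OF un True that t0] b_def by simp
      have ne: "inv \<tau> u \<noteq> inv \<tau> v" if "\<tau> \<in> ?R" for \<tau>
        using uv permutes_inj[OF permutes_inv[OF topk_perm[OF that]]] by (metis injD)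
      have e1: "?h (\<sigma> \<circ> tr j (Suc j)) = exp (- lam * e) * ?h \<sigma>"
        by (rule hs_shift) (simp add: adj bc e_def)
      have e2: "?h (\<sigma>' \<circ> tr j' (Suc j')) = exp (- lam * (- e)) * ?h \<sigma>'"
      proof (rule hs_shift)
        fix \<tau> assume t: "\<tau> \<in> ?R"
        have "(inv \<tau> v < inv \<tau> u) = (\<not> b)" using ne[OF t] bc[OF t] by linarith
        then show "real (kendall n (\<sigma>' \<circ> tr j' (Suc j')) \<tau>) = real (kendall n \<sigma>' \<tau>) + - e"
          using adj'[OF t] by (simp add: e_def)
      qed
      have "exp (- lam * e) * exp (- lam * (- e)) = 1" by (simp flip: exp_add)
      then show ?thesis unfolding e1 e2 by (simp add: algebra_simps)
    qed
  next
    case False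
    define g where "g = tr u v"
    have g: "g permutes {1..n}" unfolding g_def using un by (rule permutes_swap_id)
    have fix2: "g (a2 i) = a2 i" if "i \<in> {1..k2}" for i
      using False that unfolding g_def by (metis Transposition.transpose_apply_other imageI)
    have gg: "g \<circ> g = id" unfolding g_def by simp
    have e1: "\<sigma> \<circ> tr j (Suc j) = g \<circ> \<sigma>" unfolding g_def by (rule swap_eq_tr[OF injs u_def[symmetric] v_def[symmetric]])
    have injs': "inj \<sigma>'" using p' by (rule permutes_inj)
    have e2: "\<sigma>' \<circ> tr j' (Suc j') = g \<circ> \<sigma>'"
      unfolding g_def using swap_eq_tr[OF injs' v' u'] by (simp add: Transposition.transpose_commute)
    show ?thesis unfolding e1 e2 using hs_relabel[OF g fix2 gg p] hs_relabel[OF g fix2 gg p'] by simp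
  qed
  also have "\<dots> = Q \<sigma>" unfolding Q_def \<sigma>'_def ..
  finally show ?thesis .
qed

lemma core:
  assumes v1: "topk_valid n k1 a1" and v2: "topk_valid n k2 a2"
  shows "\<exists>c. \<forall>\<sigma>\<in>topk n k1 a1. hs lam n (topk n k2 a2) \<sigma> * hs lam n (topk n k2 a2) (antithetic n k1 a1 \<sigma>) = c"
proof -
  obtain \<sigma>0 where s0: "\<sigma>0 \<in> topk n k1 a1" using topk_nonempty[OF v1] by blast
  define Q where "Q = (\<lambda>\<sigma>. hs lam n (topk n k2 a2) \<sigma> * hs lam n (topk n k2 a2) (\<sigma> \<circ> rv n k1))"
  have "Q \<sigma> = Q \<sigma>0" if "\<sigma> \<in> topk n k1 a1" for \<sigma>
    by (rule tail_connected[OF s0 _ that]) (unfold Q_def, rule core_step[OF v1 v2])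
  then show ?thesis unfolding Q_def by (auto simp: anti_eq)
qed

lemma Pi_pair_zip:
  assumes I: "finite I"
  shows "pair_pmf (Pi_pmf I d p) (Pi_pmf I d' q) =
    map_pmf (\<lambda>z. (fst \<circ> z, snd \<circ> z)) (Pi_pmf I (d, d') (\<lambda>i. pair_pmf (p i) (q i)))"
proof (rule pmf_eqI)
  fix w :: "('a \<Rightarrow> 'b) \<times> ('a \<Rightarrow> 'c)"
  obtain f g where w: "w = (f, g)" by (cases w)
  define zz where "zz = (\<lambda>i. (f i, g i))"
  have H: "w = (fst \<circ> zz, snd \<circ> zz)" by (simp add: w zz_def o_def)
  have injH: "inj (\<lambda>z::'a \<Rightarrow> 'b \<times> 'c. (fst \<circ> z, snd \<circ> z))"
  proof (rule injI)
    fix z1 z2 :: "'a \<Rightarrow> 'b \<times> 'c"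
    assume "(fst \<circ> z1, snd \<circ> z1) = (fst \<circ> z2, snd \<circ> z2)"
    then have "\<And>i. fst (z1 i) = fst (z2 i) \<and> snd (z1 i) = snd (z2 i)" by (simp add: fun_eq_iff)
    then show "z1 = z2" by (simp add: fun_eq_iff prod_eq_iff)
  qed
  have "pmf (map_pmf (\<lambda>z. (fst \<circ> z, snd \<circ> z)) (Pi_pmf I (d, d') (\<lambda>i. pair_pmf (p i) (q i)))) w
      = pmf (Pi_pmf I (d, d') (\<lambda>i. pair_pmf (p i) (q i))) zz"
    unfolding H by (rule pmf_map_inj'[OF injH])
  also have "\<dots> = pmf (pair_pmf (Pi_pmf I d p) (Pi_pmf I d' q)) w"
    unfolding w pmf_pair using I
    by (auto simp: pmf_Pi zz_def pmf_pair prod.distrib)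
  finally show "pmf (pair_pmf (Pi_pmf I d p) (Pi_pmf I d' q)) w =
      pmf (map_pmf (\<lambda>z. (fst \<circ> z, snd \<circ> z)) (Pi_pmf I (d, d') (\<lambda>i. pair_pmf (p i) (q i)))) w" ..
qed

lemma E_bij_inv:
  assumes "finite R" "R \<noteq> {}" "bij_betw A R R"
  shows "EE (pmf_of_set R) (\<lambda>x. f (A x)) = EE (pmf_of_set R) f"
  using assms by (simp add: integral_pmf_of_set sum.reindex_bij_betw)

lemma amgm_E:
  fixes h :: "'a \<Rightarrow> real"
  assumes R: "finite R" "R \<noteq> {}" and b: "bij_betw A R R"
    and pos: "\<And>x. x \<in> R \<Longrightarrow> h x \<ge> 0"
    and c: "\<And>x. x \<in> R \<Longrightarrow> h x * h (A x) = c"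
  shows "EE (pmf_of_set R) (\<lambda>x. h x * h (A x)) \<le> (EE (pmf_of_set R) h)^2"
proof -
  obtain x0 where x0: "x0 \<in> R" using R by blast
  have AR: "A x \<in> R" if "x \<in> R" for x using b that by (auto simp: bij_betw_def)
  have "0 \<le> h x0 * h (A x0)" by (rule mult_nonneg_nonneg[OF pos[OF x0] pos[OF AR[OF x0]]])
  moreover have "h x0 * h (A x0) = c" by (rule c[OF x0])
  ultimately have c0: "c \<ge> 0" by linarith
  have E1: "EE (pmf_of_set R) (\<lambda>x. h x * h (A x)) = c"
    using R c by (simp add: integral_pmf_of_set)
  have "sqrt c \<le> (h x + h (A x)) / 2" if "x \<in> R" for x
    using arith_geo_mean_sqrt[OF pos[OF that] pos[OF AR[OF that]]] c[OF that] by simp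
  then have "(\<Sum>x\<in>R. sqrt c) \<le> (\<Sum>x\<in>R. (h x + h (A x)) / 2)" by (rule sum_mono)
  also have "\<dots> = ((\<Sum>x\<in>R. h x) + (\<Sum>x\<in>R. h (A x))) / 2"
    by (simp add: sum.distrib sum_divide_distrib[symmetric])
  also have "(\<Sum>x\<in>R. h (A x)) = (\<Sum>x\<in>R. h x)" using b by (rule sum.reindex_bij_betw)
  finally have "real (card R) * sqrt c \<le> (\<Sum>x\<in>R. h x)" by simp
  then have "sqrt c \<le> EE (pmf_of_set R) h"
    using R by (simp add: integral_pmf_of_set field_simps card_gt_0_iff)
  then have "(sqrt c)^2 \<le> (EE (pmf_of_set R) h)^2"
    by (rule power_mono) (simp add: c0)
  then show ?thesis using E1 c0 by simp
qed

definition FA :: "real \<Rightarrow> nat \<Rightarrow> nat \<Rightarrow> (nat \<Rightarrow> nat) \<Rightarrow> nat \<Rightarrow> (nat \<Rightarrow> nat) \<Rightarrow> (nat \<Rightarrow> nat) \<Rightarrow> (nat \<Rightarrow> nat) \<Rightarrow> real" where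
  "FA lam n k1 a1 k2 a2 \<sigma> \<tau> = mallows lam n \<sigma> \<tau> + mallows lam n (antithetic n k1 a1 \<sigma>) \<tau>
     + mallows lam n \<sigma> (antithetic n k2 a2 \<tau>) + mallows lam n (antithetic n k1 a1 \<sigma>) (antithetic n k2 a2 \<tau>)"

definition FI :: "real \<Rightarrow> nat \<Rightarrow> (nat \<Rightarrow> nat) \<times> (nat \<Rightarrow> nat) \<Rightarrow> (nat \<Rightarrow> nat) \<times> (nat \<Rightarrow> nat) \<Rightarrow> real" where
  "FI lam n x y = mallows lam n (fst x) (fst y) + mallows lam n (snd x) (fst y)
     + mallows lam n (fst x) (snd y) + mallows lam n (snd x) (snd y)"

lemma anti_est_rep:
  "anti_est lam n k1 a1 k2 a2 N M = (\<lambda>z. (1 / (4 * real N * real M)) *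
      (\<Sum>p\<in>{1..N}. \<Sum>q\<in>{1..M}. FA lam n k1 a1 k2 a2 (fst z p) (snd z q)))"
  by (auto simp: anti_est_def Khat_def FA_def fun_eq_iff)

definition HH :: "((nat \<Rightarrow> (nat \<Rightarrow> nat) \<times> (nat \<Rightarrow> nat)) \<times> (nat \<Rightarrow> (nat \<Rightarrow> nat) \<times> (nat \<Rightarrow> nat)))
   \<Rightarrow> ((nat \<Rightarrow> nat \<Rightarrow> nat) \<times> (nat \<Rightarrow> nat \<Rightarrow> nat)) \<times> ((nat \<Rightarrow> nat \<Rightarrow> nat) \<times> (nat \<Rightarrow> nat \<Rightarrow> nat))" where
  "HH z = ((fst \<circ> fst z, snd \<circ> fst z), (fst \<circ> snd z, snd \<circ> snd z))"

lemma iid_est_rep: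
  "(\<lambda>z. iid_est lam n N M (HH z)) = (\<lambda>z. (1 / (4 * real N * real M)) *
      (\<Sum>p\<in>{1..N}. \<Sum>q\<in>{1..M}. FI lam n (fst z p) (snd z q)))"
  by (auto simp: iid_est_def Khat_def FI_def HH_def fun_eq_iff)

lemma iid_dist_rep:
  "iid_dist n k1 a1 k2 a2 N M = map_pmf HH (pair_pmf
     (Pi_pmf {1..N} (undefined, undefined) (\<lambda>_. pair_pmf (pmf_of_set (topk n k1 a1)) (pmf_of_set (topk n k1 a1))))
     (Pi_pmf {1..M} (undefined, undefined) (\<lambda>_. pair_pmf (pmf_of_set (topk n k2 a2)) (pmf_of_set (topk n k2 a2)))))"
  unfolding iid_dist_def iid_samples_def Pi_pair_zip[OF finite_atLeastAtMost] map_pair[symmetric]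
  by (simp add: pmf.map_comp o_def HH_def[abs_def] case_prod_unfold)

lemma variance_map:
  fixes H :: "'a \<Rightarrow> 'b" and f :: "'b \<Rightarrow> real"
  shows "measure_pmf.variance (map_pmf H P) f = measure_pmf.variance P (\<lambda>x. f (H x))"
  by (simp add: integral_map_pmf)

lemma m_compare:
  fixes h :: "'a \<Rightarrow> real"
  assumes R: "finite R" "R \<noteq> {}" and b: "bij_betw A R R"
  shows "EE (pmf_of_set R) (\<lambda>x. 2 * h x + 2 * h (A x)) =
         EE (pair_pmf (pmf_of_set R) (pmf_of_set R)) (\<lambda>z. 2 * h (fst z) + 2 * h (snd z))"
proof -
  have f: "fin (pmf_of_set R)" by (rule fin_of_set[OF R])
  have fp: "fin (pair_pmf (pmf_of_set R) (pmf_of_set R))" by (rule fin_pair[OF f f])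
  have "EE (pmf_of_set R) (\<lambda>x. 2 * h x + 2 * h (A x)) = 2 * EE (pmf_of_set R) h + 2 * EE (pmf_of_set R) (\<lambda>x. h (A x))"
    by (simp add: E_add[OF f])
  also have "EE (pmf_of_set R) (\<lambda>x. h (A x)) = EE (pmf_of_set R) h" by (rule E_bij_inv[OF R b])
  also have "2 * EE (pmf_of_set R) h + 2 * EE (pmf_of_set R) h =
     EE (pair_pmf (pmf_of_set R) (pmf_of_set R)) (\<lambda>z. 2 * h (fst z) + 2 * h (snd z))"
    by (simp add: E_add[OF fp] expectation_pair_pmf_fst expectation_pair_pmf_snd)
  finally show ?thesis .
qed

lemma a_compare:
  fixes h :: "'a \<Rightarrow> real"
  assumes R: "finite R" "R \<noteq> {}" and b: "bij_betw A R R"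
    and pos: "\<And>x. x \<in> R \<Longrightarrow> h x \<ge> 0"
    and c: "\<And>x. x \<in> R \<Longrightarrow> h x * h (A x) = c"
  shows "EE (pmf_of_set R) (\<lambda>x. (2 * h x + 2 * h (A x))^2) \<le>
         EE (pair_pmf (pmf_of_set R) (pmf_of_set R)) (\<lambda>z. (2 * h (fst z) + 2 * h (snd z))^2)"
proof -
  let ?E = "EE (pmf_of_set R)" and ?P = "pair_pmf (pmf_of_set R) (pmf_of_set R)"
  have f: "fin (pmf_of_set R)" by (rule fin_of_set[OF R])
  have fp: "fin ?P" by (rule fin_pair[OF f f])
  have ex: "(2 * a + 2 * b)^2 = 4 * a^2 + 8 * (a * b) + 4 * b^2" for a b :: real
    by (simp add: power2_eq_square algebra_simps)
  have "?E (\<lambda>x. (2 * h x + 2 * h (A x))^2) = 4 * ?E (\<lambda>x. (h x)^2) + 8 * ?E (\<lambda>x. h x * h (A x)) + 4 * ?E (\<lambda>x. (h (A x))^2)"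
    unfolding ex by (simp add: E_add[OF f])
  also have "?E (\<lambda>x. (h (A x))^2) = ?E (\<lambda>x. (h x)^2)" by (rule E_bij_inv[OF R b])
  finally have L: "?E (\<lambda>x. (2 * h x + 2 * h (A x))^2) = 8 * ?E (\<lambda>x. (h x)^2) + 8 * ?E (\<lambda>x. h x * h (A x))"
    by simp
  have "EE ?P (\<lambda>z. (2 * h (fst z) + 2 * h (snd z))^2) =
     4 * EE ?P (\<lambda>z. (h (fst z))^2) + 8 * EE ?P (\<lambda>z. h (fst z) * h (snd z)) + 4 * EE ?P (\<lambda>z. (h (snd z))^2)"
    unfolding ex by (simp add: E_add[OF fp])
  also have "EE ?P (\<lambda>z. h (fst z) * h (snd z)) = (?E h)^2"
    unfolding E_pair[OF f f] by (simp add: power2_eq_square)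
  finally have R0: "EE ?P (\<lambda>z. (2 * h (fst z) + 2 * h (snd z))^2) =
     4 * EE ?P (\<lambda>z. (h (fst z))^2) + 8 * (?E h)^2 + 4 * EE ?P (\<lambda>z. (h (snd z))^2)" .
  have f1: "EE ?P (\<lambda>z. (h (fst z))^2) = ?E (\<lambda>x. (h x)^2)" by (rule expectation_pair_pmf_fst)
  have f2: "EE ?P (\<lambda>z. (h (snd z))^2) = ?E (\<lambda>x. (h x)^2)" by (rule expectation_pair_pmf_snd)
  have Rr: "EE ?P (\<lambda>z. (2 * h (fst z) + 2 * h (snd z))^2) = 8 * ?E (\<lambda>x. (h x)^2) + 8 * (?E h)^2"
    using R0 unfolding f1 f2 by simp
  have "?E (\<lambda>x. h x * h (A x)) \<le> (?E h)^2" by (rule amgm_E[where h=h and A=A and c=c, OF R b pos c])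
  then show ?thesis unfolding L Rr by simp
qed

definition h1f :: "real \<Rightarrow> nat \<Rightarrow> nat \<Rightarrow> (nat \<Rightarrow> nat) \<Rightarrow> (nat \<Rightarrow> nat) \<Rightarrow> real" where
  "h1f lam n k2 a2 \<sigma> = EE (pmf_of_set (topk n k2 a2)) (\<lambda>\<tau>. mallows lam n \<sigma> \<tau>)"

definition h2f :: "real \<Rightarrow> nat \<Rightarrow> nat \<Rightarrow> (nat \<Rightarrow> nat) \<Rightarrow> (nat \<Rightarrow> nat) \<Rightarrow> real" where
  "h2f lam n k1 a1 \<tau> = EE (pmf_of_set (topk n k1 a1)) (\<lambda>\<sigma>. mallows lam n \<sigma> \<tau>)"

lemma h1f_hs: "topk_valid n k2 a2 \<Longrightarrow> h1f lam n k2 a2 \<sigma> = hs lam n (topk n k2 a2) \<sigma> / real (card (topk n k2 a2))"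
  unfolding h1f_def hs_def mallows_def
  by (simp add: integral_pmf_of_set finite_topk topk_nonempty)

lemma h2f_hs: "topk_valid n k1 a1 \<Longrightarrow> h2f lam n k1 a1 \<tau> = hs lam n (topk n k1 a1) \<tau> / real (card (topk n k1 a1))"
  unfolding h2f_def hs_def mallows_def
  by (simp add: integral_pmf_of_set finite_topk topk_nonempty kendall_sym)

lemma hs_nonneg: "hs lam n R \<sigma> \<ge> 0"
  unfolding hs_def by (intro sum_nonneg) simp

lemma h1f_prod_const:
  assumes v1: "topk_valid n k1 a1" and v2: "topk_valid n k2 a2"
  shows "\<exists>c. \<forall>\<sigma>\<in>topk n k1 a1. h1f lam n k2 a2 \<sigma> * h1f lam n k2 a2 (antithetic n k1 a1 \<sigma>) = c"
proof -
  obtain c where c: "\<forall>\<sigma>\<in>topk n k1 a1. hs lam n (topk n k2 a2) \<sigma> * hs lam n (topk n k2 a2) (antithetic n k1 a1 \<sigma>) = c"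
    using core[OF v1 v2] by blast
  show ?thesis
    by (rule exI[of _ "c / (real (card (topk n k2 a2)))^2"]) (use c in \<open>simp add: h1f_hs[OF v2] power2_eq_square\<close>)
qed

lemma h2f_prod_const:
  assumes v1: "topk_valid n k1 a1" and v2: "topk_valid n k2 a2"
  shows "\<exists>c. \<forall>\<tau>\<in>topk n k2 a2. h2f lam n k1 a1 \<tau> * h2f lam n k1 a1 (antithetic n k2 a2 \<tau>) = c"
proof -
  obtain c where c: "\<forall>\<tau>\<in>topk n k2 a2. hs lam n (topk n k1 a1) \<tau> * hs lam n (topk n k1 a1) (antithetic n k2 a2 \<tau>) = c"
    using core[OF v2 v1] by blast
  show ?thesis
    by (rule exI[of _ "c / (real (card (topk n k1 a1)))^2"]) (use c in \<open>simp add: h2f_hs[OF v1] power2_eq_square\<close>)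
qed

lemma EFA2:
  assumes v2: "topk_valid n k2 a2"
  shows "EE (pmf_of_set (topk n k2 a2)) (FA lam n k1 a1 k2 a2 \<sigma>) =
     2 * h1f lam n k2 a2 \<sigma> + 2 * h1f lam n k2 a2 (antithetic n k1 a1 \<sigma>)"
proof -
  let ?R = "topk n k2 a2" and ?A = "antithetic n k2 a2"
  have f: "fin (pmf_of_set ?R)" by (rule fin_of_set[OF finite_topk topk_nonempty[OF v2]])
  have i1: "EE (pmf_of_set ?R) (\<lambda>\<tau>. mallows lam n \<sigma> (?A \<tau>)) = h1f lam n k2 a2 \<sigma>"
    unfolding h1f_def using E_bij_inv[OF finite_topk topk_nonempty[OF v2] anti_bij, of "mallows lam n \<sigma>"] by simp
  have i2: "EE (pmf_of_set ?R) (\<lambda>\<tau>. mallows lam n (antithetic n k1 a1 \<sigma>) (?A \<tau>)) = h1f lam n k2 a2 (antithetic n k1 a1 \<sigma>)"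
    unfolding h1f_def using E_bij_inv[OF finite_topk topk_nonempty[OF v2] anti_bij, of "mallows lam n (antithetic n k1 a1 \<sigma>)"] by simp
  show ?thesis
    unfolding FA_def[abs_def] using i1 i2 by (simp add: E_add[OF f] h1f_def)
qed

lemma EFA1:
  assumes v1: "topk_valid n k1 a1"
  shows "EE (pmf_of_set (topk n k1 a1)) (\<lambda>\<sigma>. FA lam n k1 a1 k2 a2 \<sigma> \<tau>) =
     2 * h2f lam n k1 a1 \<tau> + 2 * h2f lam n k1 a1 (antithetic n k2 a2 \<tau>)"
proof -
  let ?R = "topk n k1 a1" and ?A = "antithetic n k1 a1"
  have f: "fin (pmf_of_set ?R)" by (rule fin_of_set[OF finite_topk topk_nonempty[OF v1]])
  have i1: "EE (pmf_of_set ?R) (\<lambda>\<sigma>. mallows lam n (?A \<sigma>) \<tau>) = h2f lam n k1 a1 \<tau>"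
    unfolding h2f_def using E_bij_inv[OF finite_topk topk_nonempty[OF v1] anti_bij, of "\<lambda>\<sigma>. mallows lam n \<sigma> \<tau>"] by simp
  have i2: "EE (pmf_of_set ?R) (\<lambda>\<sigma>. mallows lam n (?A \<sigma>) (antithetic n k2 a2 \<tau>)) = h2f lam n k1 a1 (antithetic n k2 a2 \<tau>)"
    unfolding h2f_def using E_bij_inv[OF finite_topk topk_nonempty[OF v1] anti_bij, of "\<lambda>\<sigma>. mallows lam n \<sigma> (antithetic n k2 a2 \<tau>)"] by simp
  show ?thesis
    unfolding FA_def using i1 i2 by (simp add: E_add[OF f] h2f_def)
qed

lemma EFI2:
  assumes v2: "topk_valid n k2 a2"
  shows "EE (pair_pmf (pmf_of_set (topk n k2 a2)) (pmf_of_set (topk n k2 a2))) (FI lam n x) =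
     2 * h1f lam n k2 a2 (fst x) + 2 * h1f lam n k2 a2 (snd x)"
proof -
  let ?R = "topk n k2 a2"
  have f: "fin (pmf_of_set ?R)" by (rule fin_of_set[OF finite_topk topk_nonempty[OF v2]])
  show ?thesis
    unfolding E_pair[OF f f] FI_def by (simp add: E_add[OF f] h1f_def)
qed

lemma EFI1:
  assumes v1: "topk_valid n k1 a1"
  shows "EE (pair_pmf (pmf_of_set (topk n k1 a1)) (pmf_of_set (topk n k1 a1))) (\<lambda>x. FI lam n x y) =
     2 * h2f lam n k1 a1 (fst y) + 2 * h2f lam n k1 a1 (snd y)"
proof -
  let ?R = "topk n k1 a1"
  have f: "fin (pmf_of_set ?R)" by (rule fin_of_set[OF finite_topk topk_nonempty[OF v1]])
  show ?thesis
    unfolding E_pair[OF f f] FI_def by (simp add: E_add[OF f] h2f_def)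
qed

theorem theorem5:
  fixes lam :: real and n k1 k2 :: nat and a1 a2 :: "nat \<Rightarrow> nat"
  assumes "lam > 0"
    and "topk_valid n k1 a1" and "topk_valid n k2 a2"
  shows "(\<forall>N M. N \<ge> 1 \<longrightarrow> M \<ge> 1 \<longrightarrow>
            measure_pmf.expectation (anti_dist n k1 a1 k2 a2 N M) (anti_est lam n k1 a1 k2 a2 N M)
          = measure_pmf.expectation (iid_dist n k1 a1 k2 a2 N M) (iid_est lam n N M))
       \<and> (\<exists>C::real. \<forall>N M. N \<ge> 1 \<longrightarrow> M \<ge> 1 \<longrightarrow>
            V_anti lam n k1 a1 k2 a2 N M \<le> V_iid lam n k1 a1 k2 a2 N M + C / (real N * real M))"
proof -
  note v1 = assms(2) and v2 = assms(3)
  define R1 where "R1 = topk n k1 a1"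
  define R2 where "R2 = topk n k2 a2"
  define \<mu>1 where "\<mu>1 = pmf_of_set R1"
  define \<mu>2 where "\<mu>2 = pmf_of_set R2"
  define P1 where "P1 = pair_pmf \<mu>1 \<mu>1"
  define P2 where "P2 = pair_pmf \<mu>2 \<mu>2"
  define F1 where "F1 = FA lam n k1 a1 k2 a2"
  define F2 where "F2 = FI lam n"
  define h1 where "h1 = h1f lam n k2 a2"
  define h2 where "h2 = h2f lam n k1 a1"
  define A1 where "A1 = antithetic n k1 a1"
  define A2 where "A2 = antithetic n k2 a2"
  have fR1: "finite R1" "R1 \<noteq> {}" unfolding R1_def using finite_topk topk_nonempty[OF v1] by auto
  have fR2: "finite R2" "R2 \<noteq> {}" unfolding R2_def using finite_topk topk_nonempty[OF v2] by auto
  have b1: "bij_betw A1 R1 R1" unfolding A1_def R1_def by (rule anti_bij)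
  have b2: "bij_betw A2 R2 R2" unfolding A2_def R2_def by (rule anti_bij)
  have f1: "fin \<mu>1" unfolding \<mu>1_def by (rule fin_of_set[OF fR1])
  have f2: "fin \<mu>2" unfolding \<mu>2_def by (rule fin_of_set[OF fR2])
  have fP1: "fin P1" unfolding P1_def by (rule fin_pair[OF f1 f1])
  have fP2: "fin P2" unfolding P2_def by (rule fin_pair[OF f2 f2])
  define mA where "mA = EE \<mu>1 (\<lambda>u. EE \<mu>2 (F1 u))"
  define sA where "sA = EE \<mu>1 (\<lambda>u. EE \<mu>2 (\<lambda>v. (F1 u v)^2))"
  define aA where "aA = EE \<mu>1 (\<lambda>u. (EE \<mu>2 (F1 u))^2)"
  define bA where "bA = EE \<mu>2 (\<lambda>v. (EE \<mu>1 (\<lambda>u. F1 u v))^2)"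
  define mI where "mI = EE P1 (\<lambda>u. EE P2 (F2 u))"
  define sI where "sI = EE P1 (\<lambda>u. EE P2 (\<lambda>v. (F2 u v)^2))"
  define aI where "aI = EE P1 (\<lambda>u. (EE P2 (F2 u))^2)"
  define bI where "bI = EE P2 (\<lambda>v. (EE P1 (\<lambda>u. F2 u v))^2)"
  have EF1: "EE \<mu>2 (F1 u) = 2 * h1 u + 2 * h1 (A1 u)" for u
    unfolding \<mu>2_def R2_def F1_def h1_def A1_def by (rule EFA2[OF v2])
  have EF1': "EE \<mu>1 (\<lambda>u. F1 u v) = 2 * h2 v + 2 * h2 (A2 v)" for v
    unfolding \<mu>1_def R1_def F1_def h2_def A2_def by (rule EFA1[OF v1])
  have EF2: "EE P2 (F2 u) = 2 * h1 (fst u) + 2 * h1 (snd u)" for u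
    unfolding P2_def \<mu>2_def R2_def F2_def h1_def by (rule EFI2[OF v2])
  have EF2': "EE P1 (\<lambda>u. F2 u v) = 2 * h2 (fst v) + 2 * h2 (snd v)" for v
    unfolding P1_def \<mu>1_def R1_def F2_def h2_def by (rule EFI1[OF v1])
  have mAI: "mA = mI"
    unfolding mA_def mI_def EF1 EF2 \<mu>1_def P1_def \<mu>1_def by (rule m_compare[OF fR1 b1])
  have pos1: "h1 x \<ge> 0" for x unfolding h1_def h1f_hs[OF v2] by (simp add: hs_nonneg)
  have pos2: "h2 x \<ge> 0" for x unfolding h2_def h2f_hs[OF v1] by (simp add: hs_nonneg)
  obtain c1 where c1: "\<And>x. x \<in> R1 \<Longrightarrow> h1 x * h1 (A1 x) = c1"
    using h1f_prod_const[OF v1 v2, of lam] unfolding h1_def A1_def R1_def by blast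
  obtain c2 where c2: "\<And>x. x \<in> R2 \<Longrightarrow> h2 x * h2 (A2 x) = c2"
    using h2f_prod_const[OF v1 v2, of lam] unfolding h2_def A2_def R2_def by blast
  have aAI: "aA \<le> aI"
    unfolding aA_def aI_def EF1 EF2 \<mu>1_def P1_def
    by (rule a_compare[where h=h1 and A=A1 and c=c1, OF fR1 b1 pos1 c1])
  have bAI: "bA \<le> bI"
    unfolding bA_def bI_def EF1' EF2' \<mu>2_def P2_def
    by (rule a_compare[where h=h2 and A=A2 and c=c2, OF fR2 b2 pos2 c2])
  have rep: "measure_pmf.expectation (anti_dist n k1 a1 k2 a2 N M) (anti_est lam n k1 a1 k2 a2 N M)
        = (1 / (4 * real N * real M)) * (real N * real M * mA)
     \<and> measure_pmf.expectation (iid_dist n k1 a1 k2 a2 N M) (iid_est lam n N M)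
        = (1 / (4 * real N * real M)) * (real N * real M * mI)
     \<and> V_anti lam n k1 a1 k2 a2 N M = (1 / (4 * real N * real M))^2 *
         ((real M * (real N * sA + ((real N)^2 - real N) * bA)
          + ((real M)^2 - real M) * (real N * aA + ((real N)^2 - real N) * mA^2)) - (real N * real M * mA)^2)
     \<and> V_iid lam n k1 a1 k2 a2 N M = (1 / (4 * real N * real M))^2 *
         ((real M * (real N * sI + ((real N)^2 - real N) * bI)
          + ((real M)^2 - real M) * (real N * aI + ((real N)^2 - real N) * mI^2)) - (real N * real M * mI)^2)"
    for N M
  proof -
    define X where "X = Pi_pmf {1..N} (undefined :: nat \<Rightarrow> nat) (\<lambda>_. \<mu>1)"
    define Y where "Y = Pi_pmf {1..M} (undefined :: nat \<Rightarrow> nat) (\<lambda>_. \<mu>2)"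
    define X2 where "X2 = Pi_pmf {1..N} (undefined :: nat \<Rightarrow> nat, undefined :: nat \<Rightarrow> nat) (\<lambda>_. P1)"
    define Y2 where "Y2 = Pi_pmf {1..M} (undefined :: nat \<Rightarrow> nat, undefined :: nat \<Rightarrow> nat) (\<lambda>_. P2)"
    define SA where "SA = (\<lambda>z. \<Sum>p\<in>{1..N}. \<Sum>q\<in>{1..M}. F1 (fst z p) (snd z q))"
    define SI where "SI = (\<lambda>z. \<Sum>p\<in>{1..N}. \<Sum>q\<in>{1..M}. F2 (fst z p) (snd z q))"
    define c where "c = 1 / (4 * real N * real M)"
    have ad: "anti_dist n k1 a1 k2 a2 N M = pair_pmf X Y"
      unfolding anti_dist_def iid_samples_def X_def Y_def \<mu>1_def \<mu>2_def R1_def R2_def ..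
    have ae: "anti_est lam n k1 a1 k2 a2 N M = (\<lambda>z. c * SA z)"
      unfolding anti_est_rep c_def SA_def F1_def ..
    have idd: "iid_dist n k1 a1 k2 a2 N M = map_pmf HH (pair_pmf X2 Y2)"
      unfolding iid_dist_rep X2_def Y2_def P1_def P2_def \<mu>1_def \<mu>2_def R1_def R2_def ..
    have ie: "(\<lambda>z. iid_est lam n N M (HH z)) = (\<lambda>z. c * SI z)"
      unfolding iid_est_rep c_def SI_def F2_def ..
    have mA1: "EE (pair_pmf X Y) SA = real N * real M * mA"
      and mA2: "EE (pair_pmf X Y) (\<lambda>z. (SA z)^2) = real M * (real N * sA + ((real N)^2 - real N) * bA)
          + ((real M)^2 - real M) * (real N * aA + ((real N)^2 - real N) * mA^2)"
      using double_moments[where A="{1..N}" and B="{1..M}" and F=F1 and d=undefined and d'=undefined, OF finite_atLeastAtMost finite_atLeastAtMost f1 f2]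
      unfolding X_def Y_def SA_def mA_def sA_def aA_def bA_def by simp_all
    have mI1: "EE (pair_pmf X2 Y2) SI = real N * real M * mI"
      and mI2: "EE (pair_pmf X2 Y2) (\<lambda>z. (SI z)^2) = real M * (real N * sI + ((real N)^2 - real N) * bI)
          + ((real M)^2 - real M) * (real N * aI + ((real N)^2 - real N) * mI^2)"
      using double_moments[where A="{1..N}" and B="{1..M}" and F=F2 and d="(undefined, undefined)" and d'="(undefined, undefined)", OF finite_atLeastAtMost finite_atLeastAtMost fP1 fP2]
      unfolding X2_def Y2_def SI_def mI_def sI_def aI_def bI_def by simp_all
    have fXY: "fin (pair_pmf X Y)" unfolding X_def Y_def
      by (intro fin_pair fin_Pi finite_atLeastAtMost f1 f2)
    have fXY2: "fin (pair_pmf X2 Y2)" unfolding X2_def Y2_def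
      by (intro fin_pair fin_Pi finite_atLeastAtMost fP1 fP2)
    have e1: "measure_pmf.expectation (anti_dist n k1 a1 k2 a2 N M) (anti_est lam n k1 a1 k2 a2 N M) = c * (real N * real M * mA)"
      unfolding ad ae using mA1 by simp
    have e2: "measure_pmf.expectation (iid_dist n k1 a1 k2 a2 N M) (iid_est lam n N M) = c * (real N * real M * mI)"
      unfolding idd integral_map_pmf ie using mI1 by simp
    have v1': "V_anti lam n k1 a1 k2 a2 N M = c^2 * (EE (pair_pmf X Y) (\<lambda>z. (SA z)^2) - (EE (pair_pmf X Y) SA)^2)"
      unfolding V_anti_def ad ae by (rule variance_scaled[OF fXY])
    have v2': "V_iid lam n k1 a1 k2 a2 N M = c^2 * (EE (pair_pmf X2 Y2) (\<lambda>z. (SI z)^2) - (EE (pair_pmf X2 Y2) SI)^2)"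
    proof -
      have "V_iid lam n k1 a1 k2 a2 N M = measure_pmf.variance (pair_pmf X2 Y2) (\<lambda>z. iid_est lam n N M (HH z))"
        unfolding V_iid_def idd by (rule variance_map)
      also have "\<dots> = measure_pmf.variance (pair_pmf X2 Y2) (\<lambda>z. c * SI z)"
        using fun_cong[OF ie] by simp
      also have "\<dots> = c^2 * (EE (pair_pmf X2 Y2) (\<lambda>z. (SI z)^2) - (EE (pair_pmf X2 Y2) SI)^2)"
        by (rule variance_scaled[OF fXY2])
      finally show ?thesis .
    qed
    show ?thesis using e1 e2 v1' v2' unfolding mA1 mA2 mI1 mI2 c_def by simp
  qed
  show ?thesis
  proof (intro conjI allI impI)
    fix N M :: nat assume "N \<ge> 1" "M \<ge> 1"
    show "measure_pmf.expectation (anti_dist n k1 a1 k2 a2 N M) (anti_est lam n k1 a1 k2 a2 N M)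
          = measure_pmf.expectation (iid_dist n k1 a1 k2 a2 N M) (iid_est lam n N M)"
      using rep[of N M] mAI by simp
  next
    show "\<exists>C::real. \<forall>N M. N \<ge> 1 \<longrightarrow> M \<ge> 1 \<longrightarrow>
            V_anti lam n k1 a1 k2 a2 N M \<le> V_iid lam n k1 a1 k2 a2 N M + C / (real N * real M)"
    proof (intro exI[of _ "(sA - sI) / 16"] allI impI)
      fix N M :: nat assume N: "N \<ge> 1" and M: "M \<ge> 1"
      define x where "x = real N"
      define y where "y = real M"
      have x: "x \<ge> 1" and y: "y \<ge> 1" using N M by (simp_all add: x_def y_def)
      define c where "c = 1 / (4 * x * y)"
      have Vd: "V_anti lam n k1 a1 k2 a2 N M = V_iid lam n k1 a1 k2 a2 N M
          + c^2 * y * x * (sA - sI) + (c^2 * (y * (x^2 - x))) * (bA - bI) + (c^2 * ((y^2 - y) * x)) * (aA - aI)"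
        using rep[of N M] mAI unfolding x_def[symmetric] y_def[symmetric] c_def[symmetric]
        by (simp add: algebra_simps)
      have t1: "c^2 * y * x * (sA - sI) = (sA - sI) / 16 / (x * y)"
        using x y unfolding c_def by (simp add: field_simps power2_eq_square)
      have t2: "(c^2 * (y * (x^2 - x))) * (bA - bI) \<le> 0"
        using x y bAI by (intro mult_nonneg_nonpos mult_nonneg_nonneg) (auto simp: power2_eq_square)
      have t3: "(c^2 * ((y^2 - y) * x)) * (aA - aI) \<le> 0"
        using x y aAI by (intro mult_nonneg_nonpos mult_nonneg_nonneg) (auto simp: power2_eq_square)
      show "V_anti lam n k1 a1 k2 a2 N M \<le> V_iid lam n k1 a1 k2 a2 N M + (sA - sI) / 16 / (real N * real M)"
        using Vd t1 t2 t3 unfolding x_def[symmetric] y_def[symmetric] by linarith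
    qed
  qed
qed

end
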